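(* Let $(X,\|\cdot\|_X)$ be a Banach space and $\mathcal{K}\subset X$. Then $\mathcal{K}$ is totally bounded if and only if for every $n\ge1$ one has $\lim_{\gamma\to\infty}d_n^\gamma(\mathcal{K})_X=0$.
   Context: $\mathcal{K}$ is totally bounded if for every $\varepsilon>0$ it is covered by finitely many closed balls of radius $\varepsilon$. For $k\ge1$ and a norm $\|\cdot\|_{Y_k}$ on $\mathbb{R}^k$ let $B_{Y_k}=\{y\in\mathbb{R}^k:\|y\|_{Y_k}\le1\}$. For $\gamma\ge0$, the fixed Lipschitz width is $d^\gamma(\mathcal{K},Y_k)_X=\inf_{\Phi}\sup_{f\in\mathcal{K}}\inf_{y\in B_{Y_k}}\|f-\Phi(y)\|_X\in[0,\infty]$, the infimum being over all maps $\Phi:B_{Y_k}\to X$ with $\|\Phi(y)-\Phi(y')\|_X\le\gamma\|y-y'\|_{Y_k}$ for all $y,y'\in B_{Y_k}$. The Lipschitz width is $d_n^\gamma(\mathcal{K})_X=\inf_{1\le k\le n}\inf_{\|\cdot\|_{Y_k}}d^\gamma(\mathcal{K},Y_k)_X$, where the inner infimum is over all norms on $\mathbb{R}^k$. *)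

theory Defs
  imports "HOL-Analysis.Analysis"
begin

definition totally_bounded_cb :: "'a::metric_space set \<Rightarrow> bool" where
  "totally_bounded_cb K \<longleftrightarrow>
     (\<forall>\<epsilon>>0. \<exists>F. finite F \<and> K \<subseteq> (\<Union>c\<in>F. cball c \<epsilon>))"

text \<open>R^k is represented as the vectors in nat => real supported in {..<k}.\<close>
definition Rk :: "nat \<Rightarrow> (nat \<Rightarrow> real) set" where
  "Rk k = {y. \<forall>i\<ge>k. y i = 0}"

definition is_norm_on_Rk :: "nat \<Rightarrow> ((nat \<Rightarrow> real) \<Rightarrow> real) \<Rightarrow> bool" where
  "is_norm_on_Rk k N \<longleftrightarrow>
     (\<forall>y\<in>Rk k. 0 \<le> N y \<and> (N y = 0 \<longleftrightarrow> y = (\<lambda>i. 0))) \<and>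
     (\<forall>y\<in>Rk k. \<forall>c::real. N (\<lambda>i. c * y i) = \<bar>c\<bar> * N y) \<and>
     (\<forall>y\<in>Rk k. \<forall>z\<in>Rk k. N (\<lambda>i. y i + z i) \<le> N y + N z)"

definition unit_ball_Rk :: "nat \<Rightarrow> ((nat \<Rightarrow> real) \<Rightarrow> real) \<Rightarrow> (nat \<Rightarrow> real) set" where
  "unit_ball_Rk k N = {y \<in> Rk k. N y \<le> 1}"

definition fixed_lip_width ::
  "real \<Rightarrow> 'a::real_normed_vector set \<Rightarrow> nat \<Rightarrow> ((nat \<Rightarrow> real) \<Rightarrow> real) \<Rightarrow> ennreal" where
  "fixed_lip_width \<gamma> K k N =
     (INF \<Phi>\<in>{\<Phi> :: (nat \<Rightarrow> real) \<Rightarrow> 'a.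
              \<forall>y\<in>unit_ball_Rk k N. \<forall>y'\<in>unit_ball_Rk k N.
                 norm (\<Phi> y - \<Phi> y') \<le> \<gamma> * N (\<lambda>i. y i - y' i)}.
        (SUP f\<in>K. (INF y\<in>unit_ball_Rk k N. ennreal (norm (f - \<Phi> y)))))"

definition lip_width :: "nat \<Rightarrow> real \<Rightarrow> 'a::real_normed_vector set \<Rightarrow> ennreal" where
  "lip_width n \<gamma> K =
     (INF kN\<in>{(k, N). 1 \<le> k \<and> k \<le> n \<and> is_norm_on_Rk k N}.
        fixed_lip_width \<gamma> K (fst kN) (snd kN))"

end

theory Submission imports Defs begin

definition clamp01 :: "real \<Rightarrow> real" where "clamp01 s = max 0 (min 1 s)"

definition gpath :: "'a::real_normed_vector list \<Rightarrow> real \<Rightarrow> 'a" where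
  "gpath cs t = cs!0 + (\<Sum>j<length cs - 1. clamp01 (t - real j) *\<^sub>R (cs!(Suc j) - cs!j))"

lemma gpath_at:
  assumes "i < length cs"
  shows "gpath cs (real i) = cs!i"
proof -
  have "(\<Sum>j<length cs - 1. clamp01 (real i - real j) *\<^sub>R (cs!(Suc j) - cs!j))
      = (\<Sum>j<length cs - 1. if j < i then (cs!(Suc j) - cs!j) else 0)"
    by (rule sum.cong) (auto simp: clamp01_def)
  also have "\<dots> = (\<Sum>j\<in>{..<length cs - 1} \<inter> {j. j < i}. cs!(Suc j) - cs!j)"
    by (simp add: sum.inter_restrict)
  also have "{..<length cs - 1} \<inter> {j. j < i} = {..<i}" using assms by auto
  also have "(\<Sum>j<i. cs!(Suc j) - cs!j) = cs!i - cs!0" by (rule sum_lessThan_telescope)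
  finally show ?thesis by (simp add: gpath_def)
qed

lemma clamp_lip: "\<bar>clamp01 a - clamp01 b\<bar> \<le> \<bar>a - b\<bar>"
  by (simp add: clamp01_def)

lemma gpath_lip:
  "norm (gpath cs s - gpath cs t) \<le> (\<Sum>j<length cs - 1. norm (cs!(Suc j) - cs!j)) * \<bar>s - t\<bar>"
proof -
  have "gpath cs s - gpath cs t = (\<Sum>j<length cs - 1. (clamp01 (s - real j) - clamp01 (t - real j)) *\<^sub>R (cs!(Suc j) - cs!j))"
    by (simp add: gpath_def sum_subtractf[symmetric] scaleR_diff_left)
  also have "norm \<dots> \<le> (\<Sum>j<length cs - 1. norm ((clamp01 (s - real j) - clamp01 (t - real j)) *\<^sub>R (cs!(Suc j) - cs!j)))"
    by (rule norm_sum)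
  also have "\<dots> \<le> (\<Sum>j<length cs - 1. \<bar>s - t\<bar> * norm (cs!(Suc j) - cs!j))"
  proof (rule sum_mono)
    fix j
    have "\<bar>clamp01 (s - real j) - clamp01 (t - real j)\<bar> \<le> \<bar>s - t\<bar>"
      using clamp_lip[of "s - real j" "t - real j"] by simp
    then show "norm ((clamp01 (s - real j) - clamp01 (t - real j)) *\<^sub>R (cs!(Suc j) - cs!j)) \<le> \<bar>s - t\<bar> * norm (cs!(Suc j) - cs!j)"
      by (simp add: mult_right_mono)
  qed
  finally show ?thesis by (simp add: sum_distrib_left mult.commute)
qed


definition N1 :: "(nat \<Rightarrow> real) \<Rightarrow> real" where "N1 y = \<bar>y 0\<bar>"

lemma N1_norm: "is_norm_on_Rk 1 N1"
proof -
  have "y = (\<lambda>i. 0)" if "y \<in> Rk 1" "y 0 = 0" for y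
  proof
    fix i show "y i = 0" using that by (cases i) (auto simp: Rk_def)
  qed
  then show ?thesis
    by (auto simp: is_norm_on_Rk_def N1_def abs_mult)
qed

lemma fwd:
  fixes K :: "'a::real_normed_vector set"
  assumes tb: "totally_bounded_cb K" and n: "n \<ge> 1" and e: "\<epsilon> > 0"
  shows "eventually (\<lambda>\<gamma>. lip_width n \<gamma> K \<le> ennreal \<epsilon>) at_top"
proof -
  obtain F where F: "finite F" "K \<subseteq> (\<Union>c\<in>F. cball c \<epsilon>)" using tb e unfolding totally_bounded_cb_def by blast
  obtain xs where xs: "set xs = F" using F(1) finite_list by blast
  define cs where "cs = 0 # xs"
  define m where "m = length cs"
  have m1: "m \<ge> 1" by (simp add: m_def cs_def)
  define L where "L = (\<Sum>j<length cs - 1. norm (cs!(Suc j) - cs!j))"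
  have L0: "L \<ge> 0" unfolding L_def by (rule sum_nonneg) auto
  define \<Phi> where "\<Phi> = (\<lambda>y::nat\<Rightarrow>real. gpath cs (real m * y 0))"
  show ?thesis
  proof (rule eventually_at_top_linorderI[of "L * real m"])
    fix \<gamma> assume g: "\<gamma> \<ge> L * real m"
    have lipP: "\<forall>y\<in>unit_ball_Rk 1 N1. \<forall>y'\<in>unit_ball_Rk 1 N1.
                 norm (\<Phi> y - \<Phi> y') \<le> \<gamma> * N1 (\<lambda>i. y i - y' i)"
    proof (intro ballI)
      fix y y' :: "nat \<Rightarrow> real"
      have "norm (\<Phi> y - \<Phi> y') \<le> L * \<bar>real m * y 0 - real m * y' 0\<bar>"
        unfolding \<Phi>_def L_def by (rule gpath_lip)
      also have "\<dots> = (L * real m) * \<bar>y 0 - y' 0\<bar>"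
        by (simp add: right_diff_distrib[symmetric] abs_mult)
      also have "\<dots> \<le> \<gamma> * \<bar>y 0 - y' 0\<bar>" using g by (simp add: mult_right_mono)
      finally show "norm (\<Phi> y - \<Phi> y') \<le> \<gamma> * N1 (\<lambda>i. y i - y' i)" by (simp add: N1_def)
    qed
    have sup: "(SUP f\<in>K. (INF y\<in>unit_ball_Rk 1 N1. ennreal (norm (f - \<Phi> y)))) \<le> ennreal \<epsilon>"
    proof (rule SUP_least)
      fix f assume "f \<in> K"
      then obtain c where c: "c \<in> F" "dist c f \<le> \<epsilon>" using F(2) by auto
      then obtain i where i: "i < length xs" "xs!i = c" using xs by (auto simp: in_set_conv_nth)
      define y where "y = (\<lambda>j::nat. if j = 0 then real (Suc i) / real m else 0)"
      have im: "Suc i < m" using i by (simp add: m_def cs_def)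
      have yB: "y \<in> unit_ball_Rk 1 N1"
        using im by (auto simp: y_def unit_ball_Rk_def Rk_def N1_def)
      have "\<Phi> y = gpath cs (real (Suc i))" using m1 by (simp add: \<Phi>_def y_def)
      also have "\<dots> = cs!(Suc i)" using im by (intro gpath_at) (simp add: m_def)
      also have "\<dots> = c" using i by (simp add: cs_def)
      finally have "norm (f - \<Phi> y) \<le> \<epsilon>" using c by (simp add: dist_norm norm_minus_commute)
      then have "ennreal (norm (f - \<Phi> y)) \<le> ennreal \<epsilon>" by (rule ennreal_leI)
      then show "(INF y\<in>unit_ball_Rk 1 N1. ennreal (norm (f - \<Phi> y))) \<le> ennreal \<epsilon>"
        by (rule INF_lower2[OF yB])
    qed
    have "fixed_lip_width \<gamma> K 1 N1 \<le> ennreal \<epsilon>"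
      unfolding fixed_lip_width_def by (rule INF_lower2[of \<Phi>]) (use lipP sup in auto)
    moreover have "lip_width n \<gamma> K \<le> fixed_lip_width \<gamma> K 1 N1"
      unfolding lip_width_def
      by (rule INF_lower2[where i="(1::nat, N1)"]) (use n N1_norm in auto)
    ultimately show "lip_width n \<gamma> K \<le> ennreal \<epsilon>" by simp
  qed
qed


lemma img_tb:
  fixes \<Phi> :: "(nat \<Rightarrow> real) \<Rightarrow> 'a::real_normed_vector"
  assumes N: "is_norm_on_Rk 1 N"
    and lip: "\<forall>y\<in>unit_ball_Rk 1 N. \<forall>y'\<in>unit_ball_Rk 1 N.
                 norm (\<Phi> y - \<Phi> y') \<le> \<gamma> * N (\<lambda>i. y i - y' i)"
    and d: "\<delta> > 0"
  shows "\<exists>F. finite F \<and> \<Phi> ` unit_ball_Rk 1 N \<subseteq> (\<Union>c\<in>F. ball c \<delta>)"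
proof -
  define e where "e = (\<lambda>i::nat. if i = 0 then 1::real else 0)"
  define pt where "pt = (\<lambda>t::real. (\<lambda>i. t * e i))"
  have eR: "e \<in> Rk 1" by (simp add: e_def Rk_def)
  have ptR: "pt t \<in> Rk 1" for t by (simp add: pt_def e_def Rk_def)
  have "e \<noteq> (\<lambda>i. 0)" by (metis e_def one_neq_zero)
  have pos: "\<forall>y\<in>Rk 1. 0 \<le> N y \<and> (N y = 0 \<longleftrightarrow> y = (\<lambda>i. 0))"
    and hom: "\<forall>y\<in>Rk 1. \<forall>c::real. N (\<lambda>i. c * y i) = \<bar>c\<bar> * N y"
    using N unfolding is_norm_on_Rk_def by auto
  have "0 \<le> N e" "N e \<noteq> 0" using pos eR \<open>e \<noteq> (\<lambda>i. 0)\<close> by auto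
  then have Ne: "N e > 0" by simp
  have Npt: "N (pt t) = \<bar>t\<bar> * N e" for t
    using hom eR unfolding pt_def by simp
  define R where "R = 1 / N e"
  define h where "h = (\<lambda>t. \<Phi> (pt t))"
  have ptB: "pt t \<in> unit_ball_Rk 1 N" if "t \<in> {-R..R}" for t
  proof -
    have "\<bar>t\<bar> \<le> R" using that by auto
    then have "\<bar>t\<bar> * N e \<le> R * N e" using Ne by (simp add: mult_right_mono)
    also have "\<dots> = 1" using Ne by (simp add: R_def)
    finally show ?thesis using ptR Npt by (simp add: unit_ball_Rk_def)
  qed
  have sub: "\<Phi> ` unit_ball_Rk 1 N \<subseteq> h ` {-R..R}"
  proof
    fix z assume "z \<in> \<Phi> ` unit_ball_Rk 1 N"
    then obtain y where y: "y \<in> unit_ball_Rk 1 N" "z = \<Phi> y" by auto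
    have yR: "y \<in> Rk 1" and yN: "N y \<le> 1" using y by (auto simp: unit_ball_Rk_def)
    have "y = pt (y 0)"
    proof
      fix i show "y i = pt (y 0) i" using yR by (cases i) (auto simp: pt_def e_def Rk_def)
    qed
    then have "N y = N (pt (y 0))" by (rule arg_cong)
    then have "\<bar>y 0\<bar> * N e \<le> 1" using yN Npt by simp
    then have "\<bar>y 0\<bar> \<le> R" using Ne by (simp add: R_def field_simps)
    then have "y 0 \<in> {-R..R}" by auto
    moreover have "z = h (y 0)" unfolding h_def y(2) by (rule arg_cong[OF \<open>y = pt (y 0)\<close>])
    ultimately show "z \<in> h ` {-R..R}" by blast
  qed
  have "(\<bar>\<gamma>\<bar> * N e)-lipschitz_on {-R..R} h"
  proof (rule lipschitz_onI)
    fix s t assume st: "s \<in> {-R..R}" "t \<in> {-R..R}"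
    have eq: "(\<lambda>i. pt s i - pt t i) = pt (s - t)" by (auto simp: pt_def algebra_simps)
    have "norm (\<Phi> (pt s) - \<Phi> (pt t)) \<le> \<gamma> * N (\<lambda>i. pt s i - pt t i)"
      using bspec[OF bspec[OF lip ptB[OF st(1)]] ptB[OF st(2)]] .
    then have "dist (h s) (h t) \<le> \<gamma> * N (pt (s - t))"
      unfolding h_def dist_norm eq .
    also have "\<dots> = \<gamma> * (\<bar>s - t\<bar> * N e)" by (simp add: Npt)
    also have "\<dots> \<le> \<bar>\<gamma>\<bar> * (\<bar>s - t\<bar> * N e)"
      using Ne by (intro mult_right_mono) auto
    finally show "dist (h s) (h t) \<le> \<bar>\<gamma>\<bar> * N e * dist s t" by (simp add: dist_real_def mult_ac)
  next
    show "0 \<le> \<bar>\<gamma>\<bar> * N e" using Ne by simp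
  qed
  then have cont: "continuous_on {-R..R} h" by (rule lipschitz_on_continuous_on)
  have "compact (h ` {-R..R})" by (rule compact_continuous_image[OF cont compact_Icc])
  then have sc: "seq_compact (h ` {-R..R})" by (rule compact_imp_seq_compact)
  obtain F where F: "finite F" "h ` {-R..R} \<subseteq> (\<Union>c\<in>F. ball c \<delta>)"
    using seq_compact_imp_totally_bounded[OF sc, rule_format, OF d] by auto
  show ?thesis
    by (rule exI[of _ F], rule conjI[OF F(1) subset_trans[OF sub F(2)]])
qed

lemma bwd:
  fixes K :: "'a::real_normed_vector set"
  assumes lim: "((\<lambda>\<gamma>. lip_width 1 \<gamma> K) \<longlongrightarrow> 0) at_top"
  shows "totally_bounded_cb K"
  unfolding totally_bounded_cb_def
proof (intro allI impI)
  fix \<epsilon> :: real assume e: "\<epsilon> > 0"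
  have e2: "\<epsilon>/2 > 0" using e by simp
  have "ennreal (\<epsilon>/2) > 0" using e by simp
  then have "eventually (\<lambda>\<gamma>. lip_width 1 \<gamma> K < ennreal (\<epsilon>/2)) at_top"
    by (rule order_tendstoD(2)[OF lim])
  then obtain \<gamma>0 where g0: "\<forall>\<gamma>\<ge>\<gamma>0. lip_width 1 \<gamma> K < ennreal (\<epsilon>/2)"
    unfolding eventually_at_top_linorder by blast
  define \<gamma> where "\<gamma> = \<gamma>0"
  have "lip_width 1 \<gamma> K < ennreal (\<epsilon>/2)" using g0 \<gamma>_def by simp
  then have "\<exists>kN\<in>{(k, N). 1 \<le> k \<and> k \<le> (1::nat) \<and> is_norm_on_Rk k N}.
    fixed_lip_width \<gamma> K (fst kN) (snd kN) < ennreal (\<epsilon>/2)"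
    by (simp only: lip_width_def INF_less_iff)
  then obtain kN where kN: "kN \<in> {(k, N). 1 \<le> k \<and> k \<le> (1::nat) \<and> is_norm_on_Rk k N}"
    "fixed_lip_width \<gamma> K (fst kN) (snd kN) < ennreal (\<epsilon>/2)" by (rule bexE)
  define N where "N = snd kN"
  have k1: "fst kN = 1" and N: "is_norm_on_Rk 1 N" using kN(1) by (auto simp: N_def)
  have "fixed_lip_width \<gamma> K 1 N < ennreal (\<epsilon>/2)" using kN(2) k1 N_def by simp
  then have "\<exists>\<Phi>\<in>{\<Phi> :: (nat \<Rightarrow> real) \<Rightarrow> 'a.
              \<forall>y\<in>unit_ball_Rk 1 N. \<forall>y'\<in>unit_ball_Rk 1 N.
                 norm (\<Phi> y - \<Phi> y') \<le> \<gamma> * N (\<lambda>i. y i - y' i)}.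
        (SUP f\<in>K. (INF y\<in>unit_ball_Rk 1 N. ennreal (norm (f - \<Phi> y)))) < ennreal (\<epsilon>/2)"
    by (simp only: fixed_lip_width_def INF_less_iff)
  then obtain \<Phi> :: "(nat \<Rightarrow> real) \<Rightarrow> 'a" where
    lip0: "\<Phi> \<in> {\<Phi> :: (nat \<Rightarrow> real) \<Rightarrow> 'a.
              \<forall>y\<in>unit_ball_Rk 1 N. \<forall>y'\<in>unit_ball_Rk 1 N.
                 norm (\<Phi> y - \<Phi> y') \<le> \<gamma> * N (\<lambda>i. y i - y' i)}"
    and sup: "(SUP f\<in>K. (INF y\<in>unit_ball_Rk 1 N. ennreal (norm (f - \<Phi> y)))) < ennreal (\<epsilon>/2)"
    by (rule bexE)
  from lip0 have lip: "\<forall>y\<in>unit_ball_Rk 1 N. \<forall>y'\<in>unit_ball_Rk 1 N.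
                 norm (\<Phi> y - \<Phi> y') \<le> \<gamma> * N (\<lambda>i. y i - y' i)" by (rule CollectD)
  obtain F where F: "finite F" "\<Phi> ` unit_ball_Rk 1 N \<subseteq> (\<Union>c\<in>F. ball c (\<epsilon>/2))"
    using img_tb[OF N lip e2] by (elim exE conjE)
  have "K \<subseteq> (\<Union>c\<in>F. cball c \<epsilon>)"
  proof
    fix f assume f: "f \<in> K"
    have "(INF y\<in>unit_ball_Rk 1 N. ennreal (norm (f - \<Phi> y))) < ennreal (\<epsilon>/2)"
      by (rule SUP_lessD[OF sup f])
    then have "\<exists>y\<in>unit_ball_Rk 1 N. ennreal (norm (f - \<Phi> y)) < ennreal (\<epsilon>/2)"
      by (simp only: INF_less_iff)
    then obtain y where y: "y \<in> unit_ball_Rk 1 N" "ennreal (norm (f - \<Phi> y)) < ennreal (\<epsilon>/2)"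
      by (rule bexE)
    have d1: "norm (f - \<Phi> y) < \<epsilon>/2" using y(2) by (simp add: ennreal_less_iff)
    have "\<Phi> y \<in> (\<Union>c\<in>F. ball c (\<epsilon>/2))" using F(2) y(1) by (rule subsetD[OF _ imageI])
    then obtain c where c1: "c \<in> F" "\<Phi> y \<in> ball c (\<epsilon>/2)" by (rule UN_E)
    from c1(2) have "dist c (\<Phi> y) < \<epsilon>/2" by (simp only: mem_ball)
    note c = c1(1) this
    have "dist c f \<le> dist c (\<Phi> y) + dist (\<Phi> y) f" by (rule dist_triangle)
    also have "\<dots> < \<epsilon>" using c d1 by (simp add: dist_norm norm_minus_commute)
    finally have "f \<in> cball c \<epsilon>" by simp
    then show "f \<in> (\<Union>c\<in>F. cball c \<epsilon>)" using c(1) by blast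
  qed
  then show "\<exists>F. finite F \<and> K \<subseteq> (\<Union>c\<in>F. cball c \<epsilon>)" using F(1) by blast
qed

theorem lemma2p6:
  fixes K :: "'a::banach set"
  shows "totally_bounded_cb K \<longleftrightarrow>
           (\<forall>n\<ge>1. ((\<lambda>\<gamma>. lip_width n \<gamma> K) \<longlongrightarrow> 0) at_top)"
proof
  assume tb: "totally_bounded_cb K"
  show "\<forall>n\<ge>1. ((\<lambda>\<gamma>. lip_width n \<gamma> K) \<longlongrightarrow> 0) at_top"
  proof (intro allI impI order_tendstoI)
    fix n :: nat and a :: ennreal assume n: "n \<ge> 1" and a: "0 < a"
    obtain b :: ennreal where b: "0 < b" "b < a" using dense[OF a] by (elim exE conjE)
    have "b < top" using b(2) top.extremum by (rule less_le_trans)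
    then have bt: "b \<noteq> top" by simp
    obtain e where e: "b = ennreal e" "e \<ge> 0"
    proof (cases b)
      case (real r) then show ?thesis using that by simp
    next
      case top then show ?thesis using bt by simp
    qed
    have "e > 0" using b(1) e by simp
    then have ev: "eventually (\<lambda>\<gamma>. lip_width n \<gamma> K \<le> ennreal e) at_top" by (rule fwd[OF tb n])
    have ea: "ennreal e < a" using b(2) e(1) by simp
    have lt: "lip_width n \<gamma> K < a" if "lip_width n \<gamma> K \<le> ennreal e" for \<gamma>
      using that ea by (rule le_less_trans)
    show "eventually (\<lambda>\<gamma>. lip_width n \<gamma> K < a) at_top"
      using ev by (rule eventually_mono) (rule lt)
  next
    fix n :: nat and a :: ennreal assume "a < 0"
    then show "eventually (\<lambda>\<gamma>. lip_width n \<gamma> K > a) at_top" by simp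
  qed
next
  assume "\<forall>n\<ge>1. ((\<lambda>\<gamma>. lip_width n \<gamma> K) \<longlongrightarrow> 0) at_top"
  then have "((\<lambda>\<gamma>. lip_width 1 \<gamma> K) \<longlongrightarrow> 0) at_top" by simp
  then show "totally_bounded_cb K" by (rule bwd)
qed

end
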